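(* Let $S$ be a semigroup with finite $\mathcal{R}$-height, and let $B$ be a bi-ideal of $S$. Let $n$ be the maximum length of a chain of $\mathcal{R}$-classes of $S$ each of which intersects $B$. Then the $\mathcal{R}$-height of $B$ (regarded as a semigroup) satisfies $\mathrm{H}_{\mathcal{R}}(B)\leq 3n-1$.
   Context: For a semigroup $S$, $S^1$ denotes $S$ with an identity adjoined if necessary. Green's preorder on $S$: $a\leq_{\mathcal{R}} b$ iff $aS^1\subseteq bS^1$; $a\,\mathcal{R}\,b$ iff $a\leq_{\mathcal{R}} b$ and $b\leq_{\mathcal{R}} a$. The set of $\mathcal{R}$-classes is partially ordered by $R_a\leq R_b$ iff $a\leq_{\mathcal{R}} b$. The $\mathcal{R}$-height $\mathrm{H}_{\mathcal{R}}(S)$ is the supremum of the cardinalities (lengths) of chains in this poset. A bi-ideal of $S$ is a non-empty subset $B\subseteq S$ with $BS^1B\subseteq B$; in particular $B$ is a subsemigroup, and its $\mathcal{R}$-height is computed with respect to Green's relation $\mathcal{R}$ of the semigroup $B$ itself (i.e. $a\leq b$ in $B$ iff $aB^1\subseteq bB^1$). *)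

theory Defs
  imports Main "HOL-Library.Extended_Nat"
begin

text \<open>The semigroup S is the whole type 'a of class semigroup_mult.
  Green's R-preorder computed inside a subsemigroup X (X = UNIV gives S itself):
  a \<le>R b in X iff a X^1 \<subseteq> b X^1, i.e. a = b or a = b x for some x in X
  (a belongs to b X^1 suffices since a X^1 \<subseteq> b X^1 iff a \<in> b X^1).\<close>

definition R_le :: "'a::semigroup_mult set \<Rightarrow> 'a \<Rightarrow> 'a \<Rightarrow> bool" where
  "R_le X a b \<longleftrightarrow> (\<lambda>x. a * x) ` X \<union> {a} \<subseteq> (\<lambda>x. b * x) ` X \<union> {b}"

definition R_eq :: "'a::semigroup_mult set \<Rightarrow> 'a \<Rightarrow> 'a \<Rightarrow> bool" where
  "R_eq X a b \<longleftrightarrow> R_le X a b \<and> R_le X b a"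

text \<open>A set of representatives of a chain of R-classes (w.r.t. the R-relation of X):
  any two elements are R-comparable and distinct elements lie in distinct R-classes.
  Its cardinality is the length of the corresponding chain of R-classes.\<close>

definition R_chain :: "'a::semigroup_mult set \<Rightarrow> 'a set \<Rightarrow> bool" where
  "R_chain X C \<longleftrightarrow> (\<forall>a\<in>C. \<forall>b\<in>C. R_le X a b \<or> R_le X b a)
                   \<and> (\<forall>a\<in>C. \<forall>b\<in>C. R_eq X a b \<longrightarrow> a = b)"

text \<open>Supremum of lengths of chains of R-classes of X all of which meet Y
  (choose representatives in Y).\<close>

definition R_height_in :: "'a::semigroup_mult set \<Rightarrow> 'a set \<Rightarrow> enat" where
  "R_height_in X Y = Sup {enat (card C) | C. finite C \<and> C \<subseteq> Y \<and> R_chain X C}"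

definition R_height :: "'a::semigroup_mult set \<Rightarrow> enat" where
  "R_height X = R_height_in X X"

definition bi_ideal :: "'a::semigroup_mult set \<Rightarrow> bool" where
  "bi_ideal B \<longleftrightarrow> B \<noteq> {} \<and> (\<forall>a\<in>B. \<forall>b\<in>B. a * b \<in> B \<and> (\<forall>s. a * s * b \<in> B))"

end

theory Submission
  imports Defs
begin

lemma R_le_sub:
  assumes "\<forall>a\<in>X. \<forall>b\<in>X. a * b \<in> X"
  shows "R_le X a b \<longleftrightarrow> (a = b \<or> (\<exists>x\<in>X. a = b * x))"
proof
  assume "R_le X a b"
  then have "a \<in> (\<lambda>x. b * x) ` X \<union> {b}" unfolding R_le_def by blast
  then show "a = b \<or> (\<exists>x\<in>X. a = b * x)" by blast
next
  assume h: "a = b \<or> (\<exists>x\<in>X. a = b * x)"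
  show "R_le X a b"
  proof (cases "a = b")
    case True then show ?thesis unfolding R_le_def by blast
  next
    case False
    then obtain x where x: "x \<in> X" "a = b * x" using h by blast
    have "(\<lambda>y. a * y) ` X \<subseteq> (\<lambda>y. b * y) ` X"
    proof
      fix z assume "z \<in> (\<lambda>y. a * y) ` X"
      then obtain y where y: "y \<in> X" "z = a * y" by blast
      then have "z = b * (x * y)" using x by (simp add: mult.assoc)
      moreover have "x * y \<in> X" using assms x y by blast
      ultimately show "z \<in> (\<lambda>y. b * y) ` X" by blast
    qed
    then show ?thesis unfolding R_le_def using x by blast
  qed
qed

lemma R_le_UNIV: "R_le UNIV a b \<longleftrightarrow> (a = b \<or> (\<exists>x. a = b * x))"
proof -
  have "\<forall>a\<in>UNIV. \<forall>b\<in>UNIV. a * b \<in> (UNIV::'a set)" by simp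
  from R_le_sub[OF this, of a b] show ?thesis by simp
qed

lemma bi_closed: "bi_ideal B \<Longrightarrow> \<forall>a\<in>B. \<forall>b\<in>B. a * b \<in> B"
  unfolding bi_ideal_def by blast

lemma R_le_B: "bi_ideal B \<Longrightarrow> R_le B a b \<longleftrightarrow> (a = b \<or> (\<exists>x\<in>B. a = b * x))"
  by (rule R_le_sub[OF bi_closed])

lemma R_le_refl: "R_le X a a"
  unfolding R_le_def by blast

lemma R_le_trans: "R_le X a b \<Longrightarrow> R_le X b c \<Longrightarrow> R_le X a c"
  unfolding R_le_def by blast

lemma R_le_mono:
  assumes "bi_ideal B" "R_le B a b" shows "R_le UNIV a b"
proof -
  have "a = b \<or> (\<exists>x\<in>B. a = b * x)" using R_le_B[OF assms(1)] assms(2) by simp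
  then show ?thesis unfolding R_le_UNIV by blast
qed

lemma bi_mid: "bi_ideal B \<Longrightarrow> a \<in> B \<Longrightarrow> b \<in> B \<Longrightarrow> a * s * b \<in> B"
  unfolding bi_ideal_def by blast

lemma four:
  assumes B: "bi_ideal B"
    and "R_le B b2 b1" "b2 \<noteq> b1" "R_le B b4 b3" "b4 \<noteq> b3" "R_le UNIV b1 b4"
  shows "R_le B b2 b3"
proof -
  obtain x1 where x1: "x1 \<in> B" "b2 = b1 * x1" using assms R_le_B[OF B] by blast
  obtain x3 where x3: "x3 \<in> B" "b4 = b3 * x3" using assms R_le_B[OF B] by blast
  show ?thesis
  proof (cases "b1 = b4")
    case True
    then have "b2 = b3 * (x3 * x1)" using x1 x3 by (simp add: mult.assoc)
    moreover have "x3 * x1 \<in> B" using bi_closed[OF B] x1 x3 by blast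
    ultimately show ?thesis using R_le_B[OF B] by blast
  next
    case False
    then obtain s where "b1 = b4 * s" using assms R_le_UNIV by blast
    then have "b2 = b3 * (x3 * s * x1)" using x1 x3 by (simp add: mult.assoc)
    moreover have "x3 * s * x1 \<in> B" using bi_mid[OF B] x1 x3 by blast
    ultimately show ?thesis using R_le_B[OF B] by blast
  qed
qed

lemma three:
  assumes B: "bi_ideal B"
    and x1B: "x1 \<in> B" and b2: "b2 = b1 * x1" and h13: "R_le UNIV b1 b3"
    and h3u: "R_le UNIV b3 (b3 * x1)"
  shows "R_le B b2 b3"
proof -
  have xx: "x1 * x1 \<in> B" "\<And>t. x1 * t * x1 \<in> B"
    using bi_closed[OF B] x1B apply blast
    using bi_mid[OF B x1B x1B] .
  obtain p where p: "b3 * x1 * p * x1 = b2"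
  proof (cases "b3 = b3 * x1")
    case True
    show ?thesis
    proof (cases "b1 = b3")
      case eq: True
      have "b3 * x1 * x1 * x1 = b2" using True[symmetric] b2 eq by simp
      then show ?thesis using that[of x1] by blast
    next
      case False
      then obtain s where s: "b1 = b3 * s" using h13 R_le_UNIV by blast
      have "b3 * x1 * s * x1 = b3 * s * x1" using True[symmetric] by simp
      then show ?thesis using that[of s] s b2 by simp
    qed
  next
    case False
    have "b3 = b3 * x1 \<or> (\<exists>x. b3 = (b3 * x1) * x)" using h3u by (simp only: R_le_UNIV)
    then obtain t where t: "b3 = b3 * x1 * t" using False by blast
    show ?thesis
    proof (cases "b1 = b3")
      case True
      have "b3 * x1 * t * x1 = b2" using t[symmetric] b2 True by simp
      then show ?thesis using that by blast
    next
      case False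
      then obtain s where s: "b1 = b3 * s" using h13 R_le_UNIV by blast
      have "b3 * x1 * (t * s) * x1 = b3 * x1 * t * s * x1" by (simp add: mult.assoc)
      also have "... = b3 * s * x1" using t[symmetric] by simp
      finally show ?thesis using that[of "t * s"] s b2 by simp
    qed
  qed
  have "b2 = b3 * (x1 * p * x1)" using p by (simp add: mult.assoc)
  then show ?thesis using R_le_B[OF B] xx by blast
qed

lemma chain_top:
  "finite C \<Longrightarrow> C \<noteq> {} \<Longrightarrow> \<forall>a\<in>C. \<forall>b\<in>C. R_le X a b \<or> R_le X b a \<Longrightarrow>
   \<exists>t\<in>C. \<forall>c\<in>C. R_le X c t"
proof (induction C rule: finite_ne_induct)
  case (singleton x) then show ?case using R_le_refl by blast
next
  case (insert x F)
  have "\<forall>a\<in>F. \<forall>b\<in>F. R_le X a b \<or> R_le X b a" using insert.prems by blast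
  then obtain t where t: "t \<in> F" "\<forall>c\<in>F. R_le X c t" using insert.IH by blast
  show ?case
  proof (cases "R_le X t x")
    case True
    have "\<forall>c\<in>insert x F. R_le X c x"
    proof
      fix c assume "c \<in> insert x F"
      then show "R_le X c x"
      proof
        assume "c = x" then show ?thesis using R_le_refl by simp
      next
        assume "c \<in> F" then show ?thesis using t(2) True R_le_trans by blast
      qed
    qed
    then show ?thesis by blast
  next
    case False
    then have "R_le X x t" using insert.prems t(1) by blast
    then show ?thesis using t by blast
  qed
qed

lemma R_chain_sub: "R_chain X C \<Longrightarrow> D \<subseteq> C \<Longrightarrow> R_chain X D"
  unfolding R_chain_def by blast

lemma chain_top2:
  assumes "finite C" "C \<noteq> {}" "R_chain X C"
  obtains t where "t \<in> C" "\<forall>c\<in>C. R_le X c t"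
proof -
  have "\<forall>a\<in>C. \<forall>b\<in>C. R_le X a b \<or> R_le X b a" using assms(3) unfolding R_chain_def by blast
  then show ?thesis using chain_top[OF assms(1,2)] that by blast
qed

lemma main:
  assumes B: "bi_ideal B" and k: "k \<ge> 1"
  shows "finite C \<Longrightarrow> C \<subseteq> B \<Longrightarrow> R_chain B C \<Longrightarrow> card C = 3 * k \<Longrightarrow>
     \<exists>D. finite D \<and> D \<subseteq> B \<and> R_chain UNIV D \<and> card D = k + 1 \<and>
        (\<exists>t\<in>C. \<forall>d\<in>D. R_le UNIV d t)"
  using k
proof (induction k arbitrary: C rule: nat_induct_at_least)
  case base
  have "card C \<noteq> 0" using base(4) by simp
  then have ne: "C \<noteq> {}" by (metis card.empty)
  obtain t1 where t1: "t1 \<in> C" "\<forall>c\<in>C. R_le B c t1"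
    using chain_top2[OF base(1) ne base(3)] by blast
  have c1: "card (C - {t1}) = 2" using base t1 by simp
  have "card (C - {t1}) \<noteq> 0" using c1 by simp
  then have ne1: "C - {t1} \<noteq> {}" by (metis card.empty)
  obtain t2 where t2: "t2 \<in> C - {t1}" "\<forall>c\<in>C - {t1}. R_le B c t2"
    using chain_top2[OF _ ne1 R_chain_sub[OF base(3)]] base(1) by blast
  have "card (C - {t1} - {t2}) = 1" using c1 t2 base by simp
  then obtain t3 where t3: "C - {t1} - {t2} = {t3}" using card_1_singletonE by blast
  have d: "t1 \<noteq> t2" "t2 \<noteq> t3" "t1 \<noteq> t3" "t3 \<in> C" "t2 \<in> C" using t2 t3 by auto
  have le: "R_le B t2 t1" "R_le B t3 t2" "R_le B t3 t1" using t1 t2 t3 d by auto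
  have inB: "t1 \<in> B" "t2 \<in> B" "t3 \<in> B" using base d t1 by auto
  have nt: "\<not> R_le B t2 t3"
  proof
    assume "R_le B t2 t3"
    then have "R_eq B t2 t3" using le unfolding R_eq_def by blast
    then show False using base(3) d unfolding R_chain_def by blast
  qed
  have u31: "R_le UNIV t3 t1" using le R_le_mono B by blast
  show ?case
  proof (cases "R_le UNIV t1 t3")
    case True
    obtain x1 where x1: "x1 \<in> B" "t2 = t1 * x1" using le(1) d R_le_B[OF B] by metis
    define u where "u = t3 * x1"
    have uB: "u \<in> B" using bi_closed[OF B] x1 inB u_def by blast
    have nu: "\<not> R_le UNIV t3 u" using three[OF B x1 True] nt u_def by blast
    have ut3: "R_le UNIV u t3" using R_le_UNIV u_def by blast
    have ut1: "R_le UNIV u t1" using R_le_trans ut3 u31 by blast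
    have n1: "\<not> R_le UNIV t1 u" using R_le_trans u31 nu by blast
    have ne: "u \<noteq> t1" using n1 R_le_refl by metis
    have "R_chain UNIV {t1, u}" unfolding R_chain_def R_eq_def using ut1 n1 R_le_refl by blast
    moreover have "\<forall>d\<in>{t1, u}. R_le UNIV d t1" using ut1 R_le_refl by blast
    ultimately show ?thesis using ne uB inB t1 by (intro exI[of _ "{t1, u}"]) auto
  next
    case False
    have ne: "t3 \<noteq> t1" using d by blast
    have "R_chain UNIV {t1, t3}" unfolding R_chain_def R_eq_def using u31 False R_le_refl by blast
    moreover have "\<forall>d\<in>{t1, t3}. R_le UNIV d t1" using u31 R_le_refl by blast
    ultimately show ?thesis using ne inB t1 by (intro exI[of _ "{t1, t3}"]) auto
  qed
next
  case (Suc k)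
  have "card C \<noteq> 0" using Suc.prems(4) by simp
  then have ne: "C \<noteq> {}" by (metis card.empty)
  obtain t1 where t1: "t1 \<in> C" "\<forall>c\<in>C. R_le B c t1"
    using chain_top2[OF Suc.prems(1) ne Suc.prems(3)] by blast
  have c1: "card (C - {t1}) = 3 * k + 2" using Suc.prems t1 by simp
  have "card (C - {t1}) \<noteq> 0" using c1 by simp
  then have ne1: "C - {t1} \<noteq> {}" by (metis card.empty)
  obtain t2 where t2: "t2 \<in> C - {t1}" "\<forall>c\<in>C - {t1}. R_le B c t2"
    using chain_top2[OF _ ne1 R_chain_sub[OF Suc.prems(3)]] Suc.prems(1) by blast
  have c2: "card (C - {t1} - {t2}) = 3 * k + 1" using c1 t2 Suc.prems by simp
  have "card (C - {t1} - {t2}) \<noteq> 0" using c2 by simp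
  then have ne2: "C - {t1} - {t2} \<noteq> {}" by (metis card.empty)
  obtain t3 where t3: "t3 \<in> C - {t1} - {t2}" "\<forall>c\<in>C - {t1} - {t2}. R_le B c t3"
    using chain_top2[OF _ ne2 R_chain_sub[OF Suc.prems(3)]] Suc.prems(1) by blast
  define C' where "C' = C - {t1} - {t2} - {t3}"
  have cC': "card C' = 3 * k" using c2 t3 Suc C'_def by simp
  have C'sub: "C' \<subseteq> C" using C'_def by blast
  obtain D' t where D': "finite D'" "D' \<subseteq> B" "R_chain UNIV D'" "card D' = k + 1"
    and t: "t \<in> C'" "\<forall>d\<in>D'. R_le UNIV d t"
  proof -
    have "finite C'" using finite_subset[OF C'sub] Suc.prems(1) by blast
    moreover have "C' \<subseteq> B" using C'sub Suc.prems(2) by blast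
    moreover have "R_chain B C'" using R_chain_sub[OF Suc.prems(3) C'sub] .
    ultimately show ?thesis using Suc.IH[of C'] cC' that by blast
  qed
  have d: "t1 \<noteq> t2" "t2 \<noteq> t3" "t3 \<noteq> t" "t2 \<in> C" "t3 \<in> C" "t \<in> C"
    using t2 t3 t C'_def by auto
  have le: "R_le B t2 t1" "R_le B t3 t2" "R_le B t t3" using t1 t2 t3 t C'_def by auto
  have nt: "\<not> R_le B t2 t3"
  proof
    assume "R_le B t2 t3"
    then have "R_eq B t2 t3" using le unfolding R_eq_def by blast
    then show False using Suc.prems(3) d unfolding R_chain_def by blast
  qed
  have n1: "\<not> R_le UNIV t1 t" proof
    assume "R_le UNIV t1 t"
    then have "R_le B t2 t3" using four[OF B le(1) _ le(3)] d by blast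
    then show False using nt by blast
  qed
  have tt1: "R_le UNIV t t1" using R_le_trans[OF R_le_mono[OF B le(3)] R_le_trans[OF R_le_mono[OF B le(2)] R_le_mono[OF B le(1)]]] .
  have dt1: "\<forall>d\<in>D'. R_le UNIV d t1" using t tt1 R_le_trans by blast
  have nd: "\<forall>d\<in>D'. \<not> R_le UNIV t1 d" using t n1 R_le_trans by blast
  have t1D: "t1 \<notin> D'" using nd R_le_refl by blast
  have "R_chain UNIV (insert t1 D')"
    using D'(3) dt1 nd R_le_refl unfolding R_chain_def R_eq_def by blast
  moreover have "\<forall>d\<in>insert t1 D'. R_le UNIV d t1" using dt1 R_le_refl by blast
  moreover have "t1 \<in> B" using t1 Suc.prems by blast
  ultimately show ?case using D' t1D t1
    by (intro exI[of _ "insert t1 D'"]) auto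
qed

theorem theorem3p1:
  fixes B :: "'a::semigroup_mult set" and n :: nat
  assumes "R_height (UNIV :: 'a set) \<noteq> \<infinity>"
    and "bi_ideal B"
    and "R_height_in (UNIV :: 'a set) B = enat n"
  shows "R_height B \<le> enat (3 * n - 1)"
proof -
  have B: "bi_ideal B" by fact
  have bound: "finite D \<Longrightarrow> D \<subseteq> B \<Longrightarrow> R_chain UNIV D \<Longrightarrow> card D \<le> n" for D
  proof -
    assume "finite D" "D \<subseteq> B" "R_chain UNIV D"
    then have "enat (card D) \<le> R_height_in UNIV B"
      unfolding R_height_in_def by (intro Sup_upper) blast
    then show "card D \<le> n" using assms(3) by simp
  qed
  obtain b where b: "b \<in> B" using B unfolding bi_ideal_def by blast
  have "R_chain UNIV {b}" unfolding R_chain_def R_eq_def using R_le_refl by blast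
  then have n1: "n \<ge> 1" using bound[of "{b}"] b by simp
  show ?thesis unfolding R_height_def R_height_in_def
  proof (rule Sup_least)
    fix x assume "x \<in> {enat (card C) |C. finite C \<and> C \<subseteq> B \<and> R_chain B C}"
    then obtain C where C: "x = enat (card C)" "finite C" "C \<subseteq> B" "R_chain B C" by blast
    have "card C \<le> 3 * n - 1"
    proof (rule ccontr)
      assume "\<not> card C \<le> 3 * n - 1"
      then have "3 * n \<le> card C" by simp
      then obtain C0 where C0: "C0 \<subseteq> C" "card C0 = 3 * n" "finite C0"
        using obtain_subset_with_card_n by metis
      obtain D where "finite D" "D \<subseteq> B" "R_chain UNIV D" "card D = n + 1"
        using main[OF B n1, of C0] C0 C R_chain_sub[of B C C0] by blast
      then show False using bound by fastforce
    qed
    then show "x \<le> enat (3 * n - 1)" using C by simp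
  qed
qed

end
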